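(* The limit $\lim_{n\to\infty}\sqrt[n]{c_n}$ exists and equals $\limsup_{n\to\infty}\sqrt[n]{c_n}$.
   Context: A permutation (one-line notation) contains $321$ if there are $i<j<k$ with $\pi_i>\pi_j>\pi_k$. $\mathcal C_n$ is the set of cyclic permutations of $[n]$ (a single $n$-cycle), and $c_n=|\mathcal C_n(321)|$ is the number of cyclic permutations of $[n]$ avoiding $321$. *)

theory Defs
  imports "HOL-Combinatorics.Permutations" "HOL-Library.Extended_Real" Complex_Main
begin

text \<open>A permutation of [n] = {1..n} is a function p with p permutes {1..n}
(identity outside {1..n}); its one-line notation is p 1, ..., p n.\<close>

definition cyclic_perm :: "nat \<Rightarrow> (nat \<Rightarrow> nat) \<Rightarrow> bool" where
  "cyclic_perm n p \<longleftrightarrow> p permutes {1..n} \<and>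
     (\<forall>x\<in>{1..n}. \<forall>y\<in>{1..n}. \<exists>k. (p ^^ k) x = y)"

definition contains321 :: "nat \<Rightarrow> (nat \<Rightarrow> nat) \<Rightarrow> bool" where
  "contains321 n p \<longleftrightarrow>
     (\<exists>i j k. 1 \<le> i \<and> i < j \<and> j < k \<and> k \<le> n \<and> p i > p j \<and> p j > p k)"

definition c :: "nat \<Rightarrow> nat" where
  "c n = card {p. cyclic_perm n p \<and> \<not> contains321 n p}"

end

theory Submission
  imports Defs "HOL-Combinatorics.Cycles"
begin


definition S :: "nat \<Rightarrow> (nat \<Rightarrow> nat) set" where
  "S n = {p. cyclic_perm n p \<and> \<not> contains321 n p}"

lemma c_S: "c n = card (S n)" unfolding c_def S_def ..

lemma finite_S: "finite (S n)"
proof -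
  have "S n \<subseteq> {p. p permutes {1..n}}" unfolding S_def cyclic_perm_def by auto
  moreover have "finite {p. p permutes {1..n}}" by (rule finite_permutations) simp
  ultimately show ?thesis by (rule finite_subset)
qed

definition cyc :: "nat \<Rightarrow> nat \<Rightarrow> nat" where
  "cyc n i = (if 1 \<le> i \<and> i < n then i + 1 else if i = n \<and> n \<ge> 1 then 1 else i)"

lemma cyc_permutes: "cyc n permutes {1..n}"
proof (rule bij_imp_permutes)
  have inj: "inj_on (cyc n) {1..n}" by (auto simp: inj_on_def cyc_def split: if_splits)
  moreover have "cyc n ` {1..n} \<subseteq> {1..n}" by (auto simp: cyc_def)
  ultimately have "cyc n ` {1..n} = {1..n}" by (simp add: endo_inj_surj)
  with inj show "bij_betw (cyc n) {1..n} {1..n}" by (simp add: bij_betw_def)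
qed (auto simp: cyc_def)

lemma cyc_iter: "1 \<le> x \<Longrightarrow> x + k \<le> n \<Longrightarrow> (cyc n ^^ k) x = x + k"
  by (induction k) (auto simp: cyc_def)

lemma cyc_cyclic: "cyclic_perm n (cyc n)"
  unfolding cyclic_perm_def
proof (intro conjI cyc_permutes ballI)
  fix x y assume x: "x \<in> {1..n}" and y: "y \<in> {1..n}"
  have a: "(cyc n ^^ (n - x)) x = n" using x cyc_iter[of x "n - x" n] by auto
  have b: "(cyc n ^^ Suc (n - x)) x = 1" using a x by (simp add: cyc_def)
  have d: "(cyc n ^^ (y - 1)) 1 = y" using y cyc_iter[of 1 "y - 1" n] by auto
  have "(cyc n ^^ ((y - 1) + Suc (n - x))) x = y" by (simp only: funpow_add comp_apply b d)
  then show "\<exists>k. (cyc n ^^ k) x = y" by blast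
qed

lemma cyc_avoid: "\<not> contains321 n (cyc n)"
  unfolding contains321_def cyc_def by auto

lemma c_pos: "c n \<ge> 1"
proof -
  have "cyc n \<in> S n" using cyc_cyclic cyc_avoid unfolding S_def by auto
  then have "S n \<noteq> {}" by auto
  then show ?thesis using finite_S c_S by (simp add: Suc_le_eq card_gt_0_iff)
qed

lemma c_zero: "c 0 = 1"
proof -
  have "S 0 \<subseteq> {id}" unfolding S_def cyclic_perm_def by auto
  moreover have "cyc 0 \<in> S 0" using cyc_cyclic cyc_avoid unfolding S_def by auto
  ultimately have "S 0 = {id}" by auto
  then show ?thesis using c_S by simp
qed



lemma perm_range: "p permutes {1..n} \<Longrightarrow> i \<in> {1..n} \<Longrightarrow> p i \<in> {1..n}"
  by (metis permutes_in_image)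

definition LR :: "nat \<Rightarrow> (nat \<Rightarrow> nat) \<Rightarrow> nat set" where
  "LR n p = {i\<in>{1..n}. \<forall>j\<in>{1..<i}. p j < p i}"

lemma nonLR_incr:
  assumes p: "p permutes {1..n}" and av: "\<not> contains321 n p"
    and j: "j \<in> {1..n}" "j \<notin> LR n p" and i: "i \<in> {1..n}" and ji: "j < i"
  shows "p j < p i"
proof -
  have inj: "inj p" using p by (rule permutes_inj)
  obtain a where a: "a \<in> {1..<j}" "\<not> p a < p j" using j unfolding LR_def by auto
  have "p a \<noteq> p j" using a inj by (auto dest: injD)
  hence pa: "p a > p j" using a by auto
  have "p j \<noteq> p i" using ji inj by (auto dest: injD)
  moreover have "\<not> p j > p i"
  proof
    assume "p j > p i"
    then have "contains321 n p" unfolding contains321_def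
      using a pa ji i by (intro exI[of _ a] exI[of _ j] exI[of _ i]) auto
    with av show False by simp
  qed
  ultimately show ?thesis by auto
qed

lemma LR_char:
  assumes p: "p permutes {1..n}" and i: "i \<in> LR n p"
  shows "p i = (LEAST v. v \<in> p ` LR n p \<and> (\<forall>j\<in>{1..<i}. p j < v))"
proof (rule Least_equality[symmetric])
  show "p i \<in> p ` LR n p \<and> (\<forall>j\<in>{1..<i}. p j < p i)" using i unfolding LR_def by auto
next
  fix v assume v: "v \<in> p ` LR n p \<and> (\<forall>j\<in>{1..<i}. p j < v)"
  then obtain a where a: "a \<in> LR n p" "v = p a" by auto
  have a1: "a \<ge> 1" using a unfolding LR_def by auto
  consider "a < i" | "a = i" | "a > i" by linarith
  then show "p i \<le> v"
  proof cases
    case 1 then show ?thesis using v a a1 by auto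
  next
    case 2 then show ?thesis using a by simp
  next
    case 3 then show ?thesis using a i unfolding LR_def by (auto intro: less_imp_le)
  qed
qed

lemma nonLR_char:
  assumes p: "p permutes {1..n}" and av: "\<not> contains321 n p"
    and i: "i \<in> {1..n}" "i \<notin> LR n p"
  shows "p i = (LEAST v. v \<in> {1..n} - p ` LR n p \<and> (\<forall>j\<in>{1..<i}. j \<notin> LR n p \<longrightarrow> p j < v))"
proof (rule Least_equality[symmetric])
  have inj: "inj p" using p by (rule permutes_inj)
  have "p i \<in> {1..n}" using perm_range[OF p i(1)] .
  moreover have "p i \<notin> p ` LR n p" using i inj by (auto dest: injD)
  moreover have "\<forall>j\<in>{1..<i}. j \<notin> LR n p \<longrightarrow> p j < p i"
    using nonLR_incr[OF p av _ _ i(1)] i by auto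
  ultimately show "p i \<in> {1..n} - p ` LR n p \<and> (\<forall>j\<in>{1..<i}. j \<notin> LR n p \<longrightarrow> p j < p i)"
    by auto
next
  fix v assume v: "v \<in> {1..n} - p ` LR n p \<and> (\<forall>j\<in>{1..<i}. j \<notin> LR n p \<longrightarrow> p j < v)"
  have "v \<in> p ` {1..n}" using v p by (simp add: permutes_image)
  then obtain a where a: "a \<in> {1..n}" "v = p a" by auto
  have aL: "a \<notin> LR n p" using v a by auto
  consider "a < i" | "a = i" | "a > i" by linarith
  then show "p i \<le> v"
  proof cases
    case 1 then show ?thesis using v a aL by auto
  next
    case 2 then show ?thesis using a by simp
  next
    case 3 then show ?thesis using nonLR_incr[OF p av i(1) i(2) a(1)] a by simp
  qed
qed

lemma enc_inj:
  assumes p: "p permutes {1..n}" "\<not> contains321 n p"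
    and q: "q permutes {1..n}" "\<not> contains321 n q"
    and P: "LR n p = LR n q" and V: "p ` LR n p = q ` LR n q"
  shows "p = q"
proof -
  have main: "\<forall>i. i \<in> {1..n} \<longrightarrow> p i = q i"
  proof (rule allI, induct_tac i rule: less_induct)
    fix i assume IH: "\<And>j. j < i \<Longrightarrow> j \<in> {1..n} \<longrightarrow> p j = q j"
    show "i \<in> {1..n} \<longrightarrow> p i = q i"
    proof
      assume i: "i \<in> {1..n}"
      have eq: "\<forall>j\<in>{1..<i}. p j = q j" using IH i by auto
      show "p i = q i"
      proof (cases "i \<in> LR n p")
        case True
        have "p i = (LEAST v. v \<in> p ` LR n p \<and> (\<forall>j\<in>{1..<i}. p j < v))"
          by (rule LR_char[OF p(1) True])
        also have "\<dots> = (LEAST v. v \<in> q ` LR n q \<and> (\<forall>j\<in>{1..<i}. q j < v))"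
          using eq V by simp
        also have "\<dots> = q i"
        proof -
          have "i \<in> LR n q" using True P by simp
          then show ?thesis by (rule LR_char[OF q(1), symmetric])
        qed
        finally show ?thesis .
      next
        case False
        have "p i = (LEAST v. v \<in> {1..n} - p ` LR n p \<and> (\<forall>j\<in>{1..<i}. j \<notin> LR n p \<longrightarrow> p j < v))"
          by (rule nonLR_char[OF p i False])
        also have "\<dots> = (LEAST v. v \<in> {1..n} - q ` LR n q \<and> (\<forall>j\<in>{1..<i}. j \<notin> LR n q \<longrightarrow> q j < v))"
          using eq V P by simp
        also have "\<dots> = q i"
        proof -
          have "i \<notin> LR n q" using False P by simp
          then show ?thesis by (rule nonLR_char[OF q i, symmetric])
        qed
        finally show ?thesis .
      qed
    qed
  qed
  show ?thesis
  proof
    fix i show "p i = q i"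
      using main p(1) q(1) by (cases "i \<in> {1..n}") (auto simp: permutes_not_in)
  qed
qed

lemma c_upper: "c n \<le> 4 ^ n"
proof -
  define A where "A = {p. p permutes {1..n} \<and> \<not> contains321 n p}"
  define f where "f p = (LR n p, p ` LR n p)" for p :: "nat \<Rightarrow> nat"
  have "inj_on f A" unfolding inj_on_def A_def f_def using enc_inj by blast
  moreover have "f ` A \<subseteq> Pow {1..n} \<times> Pow {1..n}"
    proof
    fix x assume "x \<in> f ` A"
    then obtain p where p: "p \<in> A" "x = f p" by auto
    have "p ` LR n p \<subseteq> {1..n}" using perm_range[of p n] p(1) unfolding A_def LR_def by auto
    moreover have "LR n p \<subseteq> {1..n}" unfolding LR_def by auto
    ultimately show "x \<in> Pow {1..n} \<times> Pow {1..n}" using p(2) unfolding f_def by auto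
  qed
  ultimately have "card A \<le> card (Pow {1..n} \<times> Pow {1..n})"
    by (intro card_inj_on_le) auto
  also have "\<dots> = 4 ^ n" by (simp add: card_cartesian_product card_Pow power_mult_distrib[symmetric])
  finally have cA: "card A \<le> 4 ^ n" .
  have "S n \<subseteq> A" unfolding S_def A_def cyclic_perm_def by auto
  moreover have "finite A" unfolding A_def
    by (rule finite_subset[OF _ finite_permutations[of "{1..n}"]]) auto
  ultimately have "card (S n) \<le> card A" by (rule card_mono[rotated])
  with cA c_S show ?thesis by simp
qed



definition sh :: "nat \<Rightarrow> (nat \<Rightarrow> nat) \<Rightarrow> nat \<Rightarrow> nat" where
  "sh m t i = (if i \<le> m then i else t (i - m) + m)"

definition glue :: "nat \<Rightarrow> (nat \<Rightarrow> nat) \<Rightarrow> (nat \<Rightarrow> nat) \<Rightarrow> nat \<Rightarrow> nat" where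
  "glue m s t = transpose m (Suc m) \<circ> (s \<circ> sh m t)"

lemma sh_permutes:
  assumes t: "t permutes {1..n}"
  shows "sh m t permutes {m+1..m+n}"
proof (rule bij_imp_permutes)
  have inj: "inj_on (sh m t) {m+1..m+n}"
  proof (rule inj_onI)
    fix x y assume x: "x \<in> {m+1..m+n}" and y: "y \<in> {m+1..m+n}" and e: "sh m t x = sh m t y"
    then have "t (x - m) = t (y - m)" unfolding sh_def by auto
    then have "x - m = y - m" using permutes_inj[OF t] by (auto dest: injD)
    then show "x = y" using x y by auto
  qed
  moreover have "sh m t ` {m+1..m+n} \<subseteq> {m+1..m+n}"
  proof
    fix y assume "y \<in> sh m t ` {m+1..m+n}"
    then obtain x where x: "x \<in> {m+1..m+n}" "y = sh m t x" by auto
    have "x - m \<in> {1..n}" using x by auto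
    then have "t (x - m) \<in> {1..n}" using perm_range[OF t] by blast
    then show "y \<in> {m+1..m+n}" using x unfolding sh_def by auto
  qed
  ultimately have "sh m t ` {m+1..m+n} = {m+1..m+n}" by (simp add: endo_inj_surj)
  with inj show "bij_betw (sh m t) {m+1..m+n} {m+1..m+n}" by (simp add: bij_betw_def)
next
  fix x assume x: "x \<notin> {m+1..m+n}"
  show "sh m t x = x"
  proof (cases "x \<le> m")
    case False
    then have "x - m \<notin> {1..n}" using x by auto
    then have "t (x - m) = x - m" using t by (simp add: permutes_not_in)
    then show ?thesis using False unfolding sh_def by auto
  qed (simp add: sh_def)
qed

lemma glue_permutes:
  assumes s: "s permutes {1..m}" and t: "t permutes {1..n}" and m: "m \<ge> 1" and n: "n \<ge> 1"
  shows "glue m s t permutes {1..m+n}"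
proof -
  have a: "sh m t permutes {1..m+n}"
    by (rule permutes_subset[OF sh_permutes[OF t]]) auto
  have b: "s permutes {1..m+n}" by (rule permutes_subset[OF s]) auto
  have d: "transpose m (Suc m) permutes {1..m+n}" using m n by (intro permutes_swap_id) auto
  show ?thesis unfolding glue_def by (intro permutes_compose a b d)
qed

lemma glue_left:
  assumes s: "s permutes {1..m}" and i: "i \<in> {1..m}"
  shows "glue m s t i = (if s i = m then Suc m else s i)"
proof -
  have "s i \<in> {1..m}" using perm_range[OF s i] .
  then show ?thesis using i unfolding glue_def sh_def by (auto simp: transpose_def)
qed

lemma glue_right:
  assumes s: "s permutes {1..m}" and t: "t permutes {1..n}" and j: "j \<in> {1..n}"
  shows "glue m s t (j + m) = (if t j = 1 then m else t j + m)"
proof -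
  have tj: "t j \<in> {1..n}" using perm_range[OF t j] .
  then have "s (t j + m) = t j + m" using s by (simp add: permutes_not_in)
  then show ?thesis using j tj unfolding glue_def sh_def by (auto simp: transpose_def)
qed

lemma glue_avoid:
  assumes s: "s permutes {1..m}" "\<not> contains321 m s"
    and t: "t permutes {1..n}" "\<not> contains321 n t" and m: "m \<ge> 1" and n: "n \<ge> 1"
  shows "\<not> contains321 (m + n) (glue m s t)"
proof
  let ?p = "glue m s t"
  assume "contains321 (m + n) ?p"
  then obtain i j k where ijk: "1 \<le> i" "i < j" "j < k" "k \<le> m + n"
    and v: "?p i > ?p j" "?p j > ?p k" unfolding contains321_def by auto
  have L: "\<And>x. x \<in> {1..m} \<Longrightarrow> ?p x = (if s x = m then Suc m else s x) \<and> s x \<in> {1..m}"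
    using glue_left[OF s(1)] perm_range[OF s(1)] by auto
  have R: "\<And>x. x \<in> {m+1..m+n} \<Longrightarrow> ?p x = (if t (x - m) = 1 then m else t (x - m) + m) \<and> t (x - m) \<in> {1..n}"
  proof -
    fix x assume x: "x \<in> {m+1..m+n}"
    then have "x - m \<in> {1..n}" by auto
    then show "?p x = (if t (x - m) = 1 then m else t (x - m) + m) \<and> t (x - m) \<in> {1..n}"
      using glue_right[OF s(1) t(1), of "x - m"] perm_range[OF t(1)] x by auto
  qed
  have fL: "\<And>x y. x \<in> {1..m} \<Longrightarrow> y \<in> {1..m} \<Longrightarrow> ?p x > ?p y \<Longrightarrow> s x > s y"
  proof -
    fix x y assume x: "x \<in> {1..m}" and y: "y \<in> {1..m}" and g: "?p x > ?p y"
    have "s x \<noteq> s y \<longrightarrow> True" by simp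
    from L[OF x] L[OF y] g show "s x > s y"
      by (cases "s x = m"; cases "s y = m") auto
  qed
  have fR: "\<And>x y. x \<in> {m+1..m+n} \<Longrightarrow> y \<in> {m+1..m+n} \<Longrightarrow> ?p x > ?p y \<Longrightarrow> t (x - m) > t (y - m)"
  proof -
    fix x y assume x: "x \<in> {m+1..m+n}" and y: "y \<in> {m+1..m+n}" and g: "?p x > ?p y"
    from R[OF x] R[OF y] g show "t (x - m) > t (y - m)"
      by (cases "t (x - m) = 1"; cases "t (y - m) = 1") auto
  qed
  consider "k \<le> m" | "m < i" | "i \<le> m" "m < k" by linarith
  then show False
  proof cases
    case 1
    have "i \<in> {1..m}" "j \<in> {1..m}" "k \<in> {1..m}" using 1 ijk by auto
    then have "s i > s j" "s j > s k" using fL v by auto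
    then have "contains321 m s" unfolding contains321_def using ijk 1 by blast
    with s(2) show False by simp
  next
    case 2
    have "i \<in> {m+1..m+n}" "j \<in> {m+1..m+n}" "k \<in> {m+1..m+n}" using 2 ijk by auto
    then have "t (i - m) > t (j - m)" "t (j - m) > t (k - m)" using fR v by auto
    moreover have "1 \<le> i - m" "i - m < j - m" "j - m < k - m" "k - m \<le> n" using 2 ijk by auto
    ultimately have "contains321 n t" unfolding contains321_def by blast
    with t(2) show False by simp
  next
    case 3
    have ki: "k \<in> {m+1..m+n}" "i \<in> {1..m}" using 3 ijk by auto
    have "?p i \<le> Suc m" using L[OF ki(2)] by (cases "s i = m") auto
    moreover have "?p k \<ge> m" using R[OF ki(1)] by (cases "t (k - m) = 1") auto
    ultimately show False using v by linarith
  qed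
qed



lemma reach_gen:
  assumes A: "\<forall>z\<in>A. g z \<in> A" and x: "x \<in> A" and k: "(g ^^ k) (g x) = t"
    and st: "\<forall>z\<in>A. g z \<noteq> t \<longrightarrow> f (h z) = h (g z)"
    and en: "\<forall>z\<in>A. g z = t \<longrightarrow> f (h z) = t'"
  shows "\<exists>K. (f ^^ K) (h x) = t'"
  using x k
proof (induction k arbitrary: x)
  case 0
  then have "(f ^^ 1) (h x) = t'" using en by simp
  then show ?case by blast
next
  case (Suc k)
  show ?case
  proof (cases "g x = t")
    case True
    then have "(f ^^ 1) (h x) = t'" using en Suc.prems by simp
    then show ?thesis by blast
  next
    case False
    have gx: "g x \<in> A" using A Suc.prems by auto
    have "(g ^^ k) (g (g x)) = t" using Suc.prems(2) by (simp add: funpow_Suc_right del: funpow.simps)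
    then obtain K where K: "(f ^^ K) (h (g x)) = t'" using Suc.IH[OF gx] by blast
    have "f (h x) = h (g x)" using st False Suc.prems by auto
    then have "(f ^^ Suc K) (h x) = t'" using K by (simp add: funpow_Suc_right del: funpow.simps)
    then show ?thesis by blast
  qed
qed

definition reach :: "(nat \<Rightarrow> nat) \<Rightarrow> nat \<Rightarrow> nat \<Rightarrow> bool" where
  "reach f x y \<longleftrightarrow> (\<exists>k. (f ^^ k) x = y)"

lemma reach_trans: "reach f x y \<Longrightarrow> reach f y z \<Longrightarrow> reach f x z"
  unfolding reach_def by (metis comp_apply funpow_add)

lemma reach_sym:
  assumes "f permutes {1..N}" "reach f x y" shows "reach f y x"
proof -
  have "permutation f" using assms(1) unfolding permutation_permutes by blast
  then obtain M where M: "(f ^^ M) = id" "M > 0" by (rule permutation_is_nilpotent)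
  obtain k where k: "(f ^^ k) x = y" using assms(2) unfolding reach_def by blast
  have "(f ^^ (M * k - k)) y = (f ^^ (M * k - k + k)) x" using k by (simp add: funpow_add)
  also have "M * k - k + k = M * k" using M(2) by (simp add: le_add_diff_inverse2)
  also have "(f ^^ (M * k)) x = x" using M(1) by (metis funpow_mult id_funpow id_apply)
  finally show ?thesis unfolding reach_def by blast
qed

lemma glue_cyclic:
  assumes s: "cyclic_perm m s" and t: "cyclic_perm n t" and m: "m \<ge> 1" and n: "n \<ge> 1"
  shows "cyclic_perm (m + n) (glue m s t)"
proof -
  let ?p = "glue m s t"
  have sp: "s permutes {1..m}" and tp: "t permutes {1..n}" using s t unfolding cyclic_perm_def by auto
  have pp: "?p permutes {1..m+n}" using glue_permutes[OF sp tp m n] .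
  have L: "\<And>x. x \<in> {1..m} \<Longrightarrow> reach ?p x (Suc m)"
  proof -
    fix x assume x: "x \<in> {1..m}"
    have sx: "s x \<in> {1..m}" using perm_range[OF sp x] .
    have "m \<in> {1..m}" using m by auto
    then have "\<exists>k. (s ^^ k) (s x) = m" using s sx unfolding cyclic_perm_def by blast
    then obtain k where k: "(s ^^ k) (s x) = m" by blast
    have "\<exists>K. (?p ^^ K) (id x) = Suc m"
    proof (rule reach_gen[where A="{1..m}" and g=s, OF _ x k])
      show "\<forall>z\<in>{1..m}. s z \<in> {1..m}" using perm_range[OF sp] by blast
      show "\<forall>z\<in>{1..m}. s z \<noteq> m \<longrightarrow> ?p (id z) = id (s z)" using glue_left[OF sp] by auto
      show "\<forall>z\<in>{1..m}. s z = m \<longrightarrow> ?p (id z) = Suc m" using glue_left[OF sp] by auto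
    qed
    then show "reach ?p x (Suc m)" unfolding reach_def by simp
  qed
  have R: "\<And>x. x \<in> {1..n} \<Longrightarrow> reach ?p (x + m) m"
  proof -
    fix x assume x: "x \<in> {1..n}"
    have tx: "t x \<in> {1..n}" using perm_range[OF tp x] .
    have "1 \<in> {1..n}" using n by auto
    then have "\<exists>k. (t ^^ k) (t x) = 1" using t tx unfolding cyclic_perm_def by blast
    then obtain k where k: "(t ^^ k) (t x) = 1" by blast
    have "\<exists>K. (?p ^^ K) ((\<lambda>z. z + m) x) = m"
    proof (rule reach_gen[where A="{1..n}" and g=t, OF _ x k])
      show "\<forall>z\<in>{1..n}. t z \<in> {1..n}" using perm_range[OF tp] by blast
      show "\<forall>z\<in>{1..n}. t z \<noteq> 1 \<longrightarrow> ?p (z + m) = t z + m" using glue_right[OF sp tp] by auto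
      show "\<forall>z\<in>{1..n}. t z = 1 \<longrightarrow> ?p (z + m) = m" using glue_right[OF sp tp] by auto
    qed
    then show "reach ?p (x + m) m" unfolding reach_def by simp
  qed
  have mm: "reach ?p m (Suc m)" using L[of m] m by auto
  have mm': "reach ?p (Suc m) m" using R[of 1] n by simp
  have both: "\<And>x. x \<in> {1..m+n} \<Longrightarrow> reach ?p x m \<and> reach ?p x (Suc m)"
  proof -
    fix x assume x: "x \<in> {1..m+n}"
    show "reach ?p x m \<and> reach ?p x (Suc m)"
    proof (cases "x \<le> m")
      case True
      then have "reach ?p x (Suc m)" using L x by auto
      then show ?thesis using mm' reach_trans by blast
    next
      case False
      then have "x - m \<in> {1..n}" using x by auto
      then have "reach ?p (x - m + m) m" by (rule R)
      then have "reach ?p x m" using False by simp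
      then show ?thesis using mm reach_trans by blast
    qed
  qed
  show ?thesis unfolding cyclic_perm_def
  proof (intro conjI pp ballI)
    fix x y assume x: "x \<in> {1..m+n}" and y: "y \<in> {1..m+n}"
    have "reach ?p m y" using both[OF y] reach_sym[OF pp] by blast
    then have "reach ?p x y" using both[OF x] reach_trans by blast
    then show "\<exists>k. (?p ^^ k) x = y" unfolding reach_def .
  qed
qed

lemma glue_inj:
  assumes s1: "s1 permutes {1..m}" and s2: "s2 permutes {1..m}"
    and t1: "t1 permutes {1..n}" and t2: "t2 permutes {1..n}"
    and e: "glue m s1 t1 = glue m s2 t2"
  shows "s1 = s2 \<and> t1 = t2"
proof
  show "s1 = s2"
  proof
    fix i show "s1 i = s2 i"
    proof (cases "i \<in> {1..m}")
      case True
      have "s1 i \<in> {1..m}" "s2 i \<in> {1..m}" using perm_range[OF s1 True] perm_range[OF s2 True] .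
      moreover have "(if s1 i = m then Suc m else s1 i) = (if s2 i = m then Suc m else s2 i)"
        using glue_left[OF s1 True, of t1] glue_left[OF s2 True, of t2] e by simp
      ultimately show ?thesis by (auto split: if_splits)
    next
      case False then show ?thesis using s1 s2 by (simp add: permutes_not_in)
    qed
  qed
next
  show "t1 = t2"
  proof
    fix i show "t1 i = t2 i"
    proof (cases "i \<in> {1..n}")
      case True
      have "t1 i \<in> {1..n}" "t2 i \<in> {1..n}" using perm_range[OF t1 True] perm_range[OF t2 True] .
      moreover have "(if t1 i = 1 then m else t1 i + m) = (if t2 i = 1 then m else t2 i + m)"
        using glue_right[OF s1 t1 True] glue_right[OF s2 t2 True] e by simp
      ultimately show ?thesis by (auto split: if_splits)
    next
      case False then show ?thesis using t1 t2 by (simp add: permutes_not_in)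
    qed
  qed
qed

lemma c_super: assumes m: "m \<ge> 1" shows "c m * c n \<le> c (m + n)"
proof (cases "n = 0")
  case True then show ?thesis using c_zero by simp
next
  case False
  then have n: "n \<ge> 1" by simp
  have "inj_on (\<lambda>(s, t). glue m s t) (S m \<times> S n)"
  proof (rule inj_onI)
    fix a b assume a: "a \<in> S m \<times> S n" and b: "b \<in> S m \<times> S n"
      and e: "(\<lambda>(s, t). glue m s t) a = (\<lambda>(s, t). glue m s t) b"
    obtain s1 t1 where a': "a = (s1, t1)" by (cases a)
    obtain s2 t2 where b': "b = (s2, t2)" by (cases b)
    show "a = b" using glue_inj[of s1 m s2 t1 n t2] a b e a' b' unfolding S_def cyclic_perm_def by auto
  qed
  moreover have "(\<lambda>(s, t). glue m s t) ` (S m \<times> S n) \<subseteq> S (m + n)"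
  proof
    fix x assume "x \<in> (\<lambda>(s, t). glue m s t) ` (S m \<times> S n)"
    then obtain s t where st: "s \<in> S m" "t \<in> S n" "x = glue m s t" by auto
    have "cyclic_perm (m + n) x" using glue_cyclic[OF _ _ m n] st unfolding S_def by auto
    moreover have "\<not> contains321 (m + n) x"
      using glue_avoid[OF _ _ _ _ m n] st unfolding S_def cyclic_perm_def by auto
    ultimately show "x \<in> S (m + n)" unfolding S_def by auto
  qed
  ultimately have "card (S m \<times> S n) \<le> card (S (m + n))"
    using finite_S by (intro card_inj_on_le) auto
  then show ?thesis using c_S by (simp add: card_cartesian_product)
qed


lemma c_pow: assumes "m \<ge> 1" shows "c m ^ q * c r \<le> c (q * m + r)"
proof (induction q)
  case 0 then show ?case by simp
next
  case (Suc q)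
  have "c m ^ Suc q * c r = c m * (c m ^ q * c r)" by simp
  also have "\<dots> \<le> c m * c (q * m + r)" using Suc by simp
  also have "\<dots> \<le> c (m + (q * m + r))" using c_super assms by blast
  finally show ?case by (simp add: add.assoc)
qed

lemma c_pow2: assumes "m \<ge> 1" "n \<ge> m" shows "c m ^ (n div m) \<le> c n"
proof -
  have "c m ^ (n div m) * 1 \<le> c m ^ (n div m) * c (n mod m)" using c_pos by simp
  also have "\<dots> \<le> c (n div m * m + n mod m)" using c_pow assms(1) by blast
  finally show ?thesis by simp
qed

definition xs :: "nat \<Rightarrow> real" where "xs n = root n (real (c n))"

lemma xs_powr: "n \<ge> 1 \<Longrightarrow> xs n = real (c n) powr (1 / real n)"
  unfolding xs_def by (simp add: root_powr_inverse)

lemma xs_ge1: "n \<ge> 1 \<Longrightarrow> xs n \<ge> 1"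
  unfolding xs_def using c_pos by simp

lemma xs_le4: "n \<ge> 1 \<Longrightarrow> xs n \<le> 4"
proof -
  assume n: "n \<ge> 1"
  have "real (c n) \<le> 4 ^ n" using c_upper by (metis of_nat_le_iff of_nat_numeral of_nat_power)
  hence "xs n \<le> root n (4 ^ n)" unfolding xs_def using n by (simp add: real_root_le_iff)
  also have "\<dots> = 4" using n by (simp add: real_root_power_cancel)
  finally show ?thesis .
qed

lemma xs_lower:
  assumes m: "m \<ge> 1" and n: "n \<ge> m"
  shows "xs m powr (1 - real m / real n) \<le> xs n"
proof -
  have n1: "n \<ge> 1" using m n by simp
  let ?q = "n div m"
  have cm: "real (c m) \<ge> 1" using c_pos by simp
  have qm: "real (?q * m) \<ge> real n - real m"
  proof -
    have "n = ?q * m + n mod m" by simp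
    moreover have "n mod m < m" using m by simp
    ultimately show ?thesis by linarith
  qed
  have e: "1 - real m / real n \<le> real (?q * m) / real n"
  proof -
    have "1 - real m / real n = (real n - real m) / real n" using n1 by (simp add: field_simps)
    also have "\<dots> \<le> real (?q * m) / real n" using qm n1 by (intro divide_right_mono) auto
    finally show ?thesis .
  qed
  have "xs m powr (1 - real m / real n) \<le> xs m powr (real (?q * m) / real n)"
    using xs_ge1[OF m] e by (simp add: powr_mono)
  also have "\<dots> = real (c m) powr (real ?q / real n)"
    unfolding xs_powr[OF m] using m by (simp add: powr_powr)
  also have "\<dots> = (real (c m) ^ ?q) powr (1 / real n)"
    using cm by (simp add: powr_realpow[symmetric] powr_powr)
  also have "\<dots> \<le> real (c n) powr (1 / real n)"
  proof (rule powr_mono2)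
    show "real (c m) ^ ?q \<le> real (c n)" using c_pow2[OF m n]
      by (metis of_nat_le_iff of_nat_power)
  qed (use cm in auto)
  also have "\<dots> = xs n" using xs_powr[OF n1] by simp
  finally show ?thesis .
qed

theorem mainTheorem9:
  shows "\<exists>L::real. (\<lambda>n. root n (real (c n))) \<longlonglongrightarrow> L \<and>
           ereal L = limsup (\<lambda>n. ereal (root n (real (c n))))"
proof -
  define L where "L = Sup (xs ` {1..})"
  have bdd: "bdd_above (xs ` {1..})" using xs_le4 by (auto intro!: bdd_aboveI)
  have up: "\<And>n. n \<ge> 1 \<Longrightarrow> xs n \<le> L" unfolding L_def using bdd by (auto intro: cSup_upper)
  have lim: "xs \<longlonglongrightarrow> L"
  proof (rule order_tendstoI)
    fix a assume "L < a"
    then show "eventually (\<lambda>n. xs n < a) sequentially"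
      using up unfolding eventually_sequentially by (metis order.strict_trans1)
  next
    fix a assume aL: "a < L"
    then obtain y where "y \<in> xs ` {1..}" "a < y" unfolding L_def
      by (metis less_cSupE empty_iff image_is_empty atLeast_iff order_refl)
    then obtain m where m: "m \<ge> 1" "a < xs m" by auto
    have "(\<lambda>n. xs m powr (1 - real m / real n)) \<longlonglongrightarrow> xs m powr (1 - 0)"
      using xs_ge1[OF m(1)] by (intro tendsto_intros) auto
    hence "eventually (\<lambda>n. a < xs m powr (1 - real m / real n)) sequentially"
      using m(2) xs_ge1[OF m(1)] by (auto dest: order_tendstoD)
    moreover have "eventually (\<lambda>n. n \<ge> m) sequentially" by (rule eventually_ge_at_top)
    ultimately show "eventually (\<lambda>n. a < xs n) sequentially"
      by eventually_elim (use xs_lower m(1) in fastforce)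
  qed
  have lim': "(\<lambda>n. root n (real (c n))) \<longlonglongrightarrow> L" using lim unfolding xs_def .
  have "limsup (\<lambda>n. ereal (root n (real (c n)))) = ereal L"
    by (rule lim_imp_Limsup) (auto intro: lim')
  with lim' show ?thesis by auto
qed

end
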